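(* Let $V$ be a finite vocabulary. Each word $x\in V$ has a synonym set $S_x\subseteq V$ with $x\in S_x$, the synonym relation being symmetric, and a nonempty perturbation set $P_x\subseteq V$. Fix $L\ge1$, $0\le R\le L$, a finite label set $\mathcal{Y}$ and a classifier $f:V^L\to\mathcal{Y}$. For $X=x_1,\ldots,x_L\in V^L$ let $S_X=\{X'\in V^L: \sum_i\mathbb{I}\{x'_i\ne x_i\}\le R,\ x'_i\in S_{x_i}\ \forall i\}$, $\Pi_X(Z)=\prod_{i=1}^L\mathbb{I}\{z_i\in P_{x_i}\}/|P_{x_i}|$, $g^{\mathrm{RS}}(X,c)=\mathbb{P}_{Z\sim\Pi_X}(f(Z)=c)$, and, with $\mathcal{H}_{[0,1]}$ the set of all functions $h:V^L\to[0,1]$ and $\Pi_X[h]=\mathbb{E}_{Z\sim\Pi_X}[h(Z)]$, $$g^{\mathrm{RS}}_{low}(X,c)=\min_{h\in\mathcal{H}_{[0,1]}}\min_{X'\in S_X}\{\Pi_{X'}[h]:\Pi_X[h]=g^{\mathrm{RS}}(X,c)\},\quad g^{\mathrm{RS}}_{up}(X,c)=\max_{h\in\mathcal{H}_{[0,1]}}\max_{X'\in S_X}\{\Pi_{X'}[h]:\Pi_X[h]=g^{\mathrm{RS}}(X,c)\}.$$ Assume $|P_x|=|P_{x'}|$ for every word $x$ and every $x'\in S_x$. Let $q_x=\min_{x'\in S_x}|P_x\cap P_{x'}|/|P_x|$, and for a sentence $X$ order its positions $i_1,\ldots,i_L$ so that $q_{x_{i_1}}\le\cdots\le q_{x_{i_L}}$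 and put $q_X=1-\prod_{j=1}^R q_{x_{i_j}}$. Then for all $X$ and $c\in\mathcal{Y}$, $$g^{\mathrm{RS}}_{low}(X,c)\ge\max\big(g^{\mathrm{RS}}(X,c)-q_X,0\big),\qquad g^{\mathrm{RS}}_{up}(X,c)\le\min\big(g^{\mathrm{RS}}(X,c)+q_X,1\big).$$ *)

theory Defs
  imports Complex_Main
begin

definition sentences :: "nat \<Rightarrow> 'w list set" where
  "sentences L = {X. length X = L}"

definition Pi_pmf :: "('w \<Rightarrow> 'w set) \<Rightarrow> 'w list \<Rightarrow> 'w list \<Rightarrow> real" where
  "Pi_pmf P X Z = (\<Prod>i<length X. (if Z ! i \<in> P (X ! i) then 1 else 0) / real (card (P (X ! i))))"

definition Pi_exp :: "('w \<Rightarrow> 'w set) \<Rightarrow> 'w list \<Rightarrow> ('w list \<Rightarrow> real) \<Rightarrow> real" where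
  "Pi_exp P X h = (\<Sum>Z\<in>sentences (length X). Pi_pmf P X Z * h Z)"

definition g_RS :: "('w \<Rightarrow> 'w set) \<Rightarrow> ('w list \<Rightarrow> 'y) \<Rightarrow> 'w list \<Rightarrow> 'y \<Rightarrow> real" where
  "g_RS P f X c = Pi_exp P X (\<lambda>Z. if f Z = c then 1 else 0)"

definition syn_set :: "('w \<Rightarrow> 'w set) \<Rightarrow> nat \<Rightarrow> 'w list \<Rightarrow> 'w list set" where
  "syn_set S R X = {X'. length X' = length X \<and>
      card {i. i < length X \<and> X' ! i \<noteq> X ! i} \<le> R \<and>
      (\<forall>i < length X. X' ! i \<in> S (X ! i))}"

definition unit_funs :: "('w list \<Rightarrow> real) set" where
  "unit_funs = {h. \<forall>Z. 0 \<le> h Z \<and> h Z \<le> 1}"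

definition g_low :: "('w \<Rightarrow> 'w set) \<Rightarrow> ('w \<Rightarrow> 'w set) \<Rightarrow> nat \<Rightarrow> ('w list \<Rightarrow> 'y) \<Rightarrow> 'w list \<Rightarrow> 'y \<Rightarrow> real" where
  "g_low S P R f X c = Inf {Pi_exp P X' h | h X'. h \<in> unit_funs \<and> X' \<in> syn_set S R X \<and>
                              Pi_exp P X h = g_RS P f X c}"

definition g_up :: "('w \<Rightarrow> 'w set) \<Rightarrow> ('w \<Rightarrow> 'w set) \<Rightarrow> nat \<Rightarrow> ('w list \<Rightarrow> 'y) \<Rightarrow> 'w list \<Rightarrow> 'y \<Rightarrow> real" where
  "g_up S P R f X c = Sup {Pi_exp P X' h | h X'. h \<in> unit_funs \<and> X' \<in> syn_set S R X \<and>
                              Pi_exp P X h = g_RS P f X c}"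

definition q_word :: "('w \<Rightarrow> 'w set) \<Rightarrow> ('w \<Rightarrow> 'w set) \<Rightarrow> 'w \<Rightarrow> real" where
  "q_word S P x = Min ((\<lambda>x'. real (card (P x \<inter> P x')) / real (card (P x))) ` S x)"

definition q_sent :: "('w \<Rightarrow> 'w set) \<Rightarrow> ('w \<Rightarrow> 'w set) \<Rightarrow> nat \<Rightarrow> 'w list \<Rightarrow> real" where
  "q_sent S P R X = 1 - prod_list (take R (sort (map (q_word S P) X)))"

end

theory Submission
  imports Defs "HOL-Library.Multiset"
begin

lemma fin_sent: "finite (sentences n :: ('w::finite) list set)"
proof -
  have "sentences n = {xs::'w list. set xs \<subseteq> UNIV \<and> length xs = n}" unfolding sentences_def by blast
  then show ?thesis using finite_lists_length_eq[of "UNIV::'w set" n] by simp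
qed

lemma sent_Suc: "sentences (Suc n) = (\<lambda>(z,Z). z#Z) ` (UNIV \<times> sentences n)"
  unfolding sentences_def by (auto simp: length_Suc_conv image_iff)

lemma sum_prod_sent:
  fixes F :: "nat \<Rightarrow> 'w::finite \<Rightarrow> real"
  shows "(\<Sum>Z\<in>sentences n. \<Prod>i<n. F i (Z!i)) = (\<Prod>i<n. \<Sum>z\<in>UNIV. F i z)"
proof (induction n arbitrary: F)
  case 0
  have "sentences 0 = ({[]} :: 'w list set)" by (auto simp: sentences_def)
  then show ?case by simp
next
  case (Suc n)
  have inj: "inj_on (\<lambda>(z,Z). z#Z) (UNIV \<times> sentences n)" by (auto simp: inj_on_def)
  have "(\<Sum>Z\<in>sentences (Suc n). \<Prod>i<Suc n. F i (Z!i))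
      = (\<Sum>p\<in>UNIV \<times> sentences n. \<Prod>i<Suc n. F i ((fst p # snd p)!i))"
    by (simp only: sent_Suc sum.reindex[OF inj]) (simp add: case_prod_beta comp_def)
  also have "\<dots> = (\<Sum>p\<in>UNIV \<times> sentences n. F 0 (fst p) * (\<Prod>i<n. F (Suc i) (snd p!i)))"
    by (simp only: prod.lessThan_Suc_shift) simp
  also have "\<dots> = (\<Sum>z\<in>UNIV. \<Sum>Z\<in>sentences n. F 0 z * (\<Prod>i<n. F (Suc i) (Z!i)))"
    by (simp add: sum.cartesian_product case_prod_beta)
  also have "\<dots> = (\<Sum>z\<in>UNIV. F 0 z * (\<Prod>i<n. \<Sum>z\<in>UNIV. F (Suc i) z))"
    by (simp add: sum_distrib_left[symmetric] Suc.IH[of "\<lambda>i. F (Suc i)"])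
  also have "\<dots> = (\<Prod>i<Suc n. \<Sum>z\<in>UNIV. F i z)"
    by (simp only: prod.lessThan_Suc_shift sum_distrib_right)
  finally show ?case .
qed

lemma sum_ind:
  fixes B :: "'w::finite set"
  shows "(\<Sum>z\<in>UNIV. (if z \<in> B then 1 else 0) / c) = real (card B) / (c::real)"
proof -
  have "(\<Sum>z\<in>UNIV. (if z \<in> B then 1 else 0) / c) = (\<Sum>z\<in>UNIV. (if z \<in> B then 1 else 0)) / c"
    by (simp add: sum_divide_distrib)
  also have "(\<Sum>z\<in>UNIV. (if z \<in> B then 1 else 0::real)) = real (card B)"
    by (simp add: sum.If_cases)
  finally show ?thesis .
qed

lemma prod_list_nonneg': "\<forall>x\<in>set xs. 0 \<le> (x::real) \<Longrightarrow> 0 \<le> prod_list xs"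
  by (induction xs) auto

lemma prod_take_sorted:
  "sorted s \<Longrightarrow> \<forall>x\<in>set s. 0 \<le> x \<and> x \<le> (1::real) \<Longrightarrow> M \<subseteq># mset s \<Longrightarrow> size M \<le> R
   \<Longrightarrow> prod_list (take R s) \<le> prod_mset M"
proof (induction s arbitrary: M R)
  case Nil
  then show ?case by simp
next
  case (Cons a s)
  show ?case
  proof (cases R)
    case 0
    then show ?thesis using Cons.prems by simp
  next
    case (Suc R')
    show ?thesis
    proof (cases "a \<in># M")
      case True
      then obtain M' where M: "M = add_mset a M'" by (meson multi_member_split)
      have "M' \<subseteq># mset s" using Cons.prems(3) M by simp
      moreover have "size M' \<le> R'" using Cons.prems(4) M Suc by simp
      ultimately have "prod_list (take R' s) \<le> prod_mset M'"
        using Cons.IH Cons.prems(1,2) by simp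
      moreover have "0 \<le> a" using Cons.prems(2) by simp
      ultimately have "a * prod_list (take R' s) \<le> a * prod_mset M'" by (rule mult_left_mono)
      moreover have "prod_list (take R (a#s)) = a * prod_list (take R' s)" using Suc by simp
      moreover have "prod_mset M = a * prod_mset M'" using M by simp
      ultimately show ?thesis by simp
    next
      case False
      have "M \<subseteq># mset s"
        unfolding subseteq_mset_def
      proof (intro allI)
        fix x
        have "count M x \<le> count (add_mset a (mset s)) x"
          using Cons.prems(3) by (simp add: subseteq_mset_def)
        then show "count M x \<le> count (mset s) x"
          using False by (cases "x = a") (auto simp: not_in_iff)
      qed
      then have IH: "prod_list (take (Suc R') s) \<le> prod_mset M"
        using Cons.IH Cons.prems(1,2,4) Suc by simp
      have a01: "0 \<le> a" "a \<le> 1" using Cons.prems(2) by auto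
      have nn: "0 \<le> prod_list (take R' s)"
        using Cons.prems(2) by (intro prod_list_nonneg') (auto dest: in_set_takeD)
      have "prod_list (take (Suc R') (a#s)) \<le> prod_list (take (Suc R') s)"
      proof (cases "R' < length s")
        case True
        then have "a \<le> s ! R'" using Cons.prems(1) by (simp add: nth_mem)
        then show ?thesis using True nn
          by (simp add: take_Suc_conv_app_nth mult_right_mono mult.commute[of "prod_list (take R' s)"])
      next
        case False
        then show ?thesis using nn a01 by (simp add: mult_left_le_one_le)
      qed
      then show ?thesis using IH Suc by simp
    qed
  qed
qed

lemma prod_D:
  assumes D: "D \<subseteq> {..<length qs}" and cD: "card D \<le> R"
    and q01: "\<forall>x\<in>set qs. 0 \<le> x \<and> x \<le> (1::real)"
  shows "prod_list (take R (sort qs)) \<le> (\<Prod>i\<in>D. qs ! i)"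
proof -
  let ?M = "image_mset (nth qs) (mset_set D)"
  have "mset qs = image_mset (nth qs) (mset_set {..<length qs})"
    by (metis map_nth mset_map mset_set_upto_eq_mset_upto)
  moreover have "mset_set D \<subseteq># mset_set {..<length qs}"
    using D by (intro subset_imp_msubset_mset_set) auto
  ultimately have sub: "?M \<subseteq># mset (sort qs)"
    by (simp add: image_mset_subseteq_mono)
  have "prod_list (take R (sort qs)) \<le> prod_mset ?M"
    using sub cD q01 by (intro prod_take_sorted) auto
  then show ?thesis by (simp add: prod_unfold_prod_mset)
qed

lemma shift:
  fixes P :: "'w::finite \<Rightarrow> 'w set"
  assumes len: "length Y = length X"
    and cardY: "\<forall>i<length X. card (P (Y!i)) = card (P (X!i))"
    and ne: "\<And>x. P x \<noteq> {}"
    and h: "h \<in> unit_funs"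
  shows "Pi_exp P Y h \<ge> Pi_exp P X h - (1 - (\<Prod>i<length X. real (card (P (X!i) \<inter> P (Y!i))) / real (card (P (X!i)))))"
    and "Pi_exp P Y h \<le> Pi_exp P X h + (1 - (\<Prod>i<length X. real (card (P (X!i) \<inter> P (Y!i))) / real (card (P (X!i)))))"
proof -
  define n where "n = length X"
  define m where "m Z = (\<Prod>i<n. (if Z!i \<in> P (X!i) \<inter> P (Y!i) then 1 else 0) / real (card (P (X!i))))" for Z
  define r where "r = (\<Prod>i<length X. real (card (P (X!i) \<inter> P (Y!i))) / real (card (P (X!i))))"
  have cpos: "real (card (P x)) > 0" for x using ne[of x] by (simp add: card_gt_0_iff)
  have h01: "0 \<le> h Z" "h Z \<le> 1" for Z using h by (auto simp: unit_funs_def)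
  have sumX: "(\<Sum>Z\<in>sentences n. Pi_pmf P X Z) = 1"
    unfolding Pi_pmf_def n_def[symmetric]
    using sum_prod_sent[of "\<lambda>i z. (if z \<in> P (X!i) then 1 else 0) / real (card (P (X!i)))" n]
    by (simp add: sum_ind ne)
  have sumY: "(\<Sum>Z\<in>sentences n. Pi_pmf P Y Z) = 1"
    unfolding Pi_pmf_def n_def len
    using sum_prod_sent[of "\<lambda>i z. (if z \<in> P (Y!i) then 1 else 0) / real (card (P (Y!i)))" "length X"]
    by (simp add: sum_ind ne)
  have summ: "(\<Sum>Z\<in>sentences n. m Z) = r"
    unfolding m_def r_def n_def
    using sum_prod_sent[of "\<lambda>i z. (if z \<in> P (X!i) \<inter> P (Y!i) then 1 else 0) / real (card (P (X!i)))" "length X"]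
    by (simp only: sum_ind)
  have m0: "0 \<le> m Z" for Z unfolding m_def by (intro prod_nonneg) auto
  have mX: "m Z \<le> Pi_pmf P X Z" for Z
    unfolding m_def Pi_pmf_def n_def
    by (intro prod_mono) (auto simp: divide_right_mono)
  have mY: "m Z \<le> Pi_pmf P Y Z" for Z
    unfolding m_def Pi_pmf_def n_def len
    by (intro prod_mono) (auto simp: divide_right_mono cardY)
  have EX: "Pi_exp P X h = (\<Sum>Z\<in>sentences n. Pi_pmf P X Z * h Z)"
    unfolding Pi_exp_def n_def ..
  have EY: "Pi_exp P Y h = (\<Sum>Z\<in>sentences n. Pi_pmf P Y Z * h Z)"
    unfolding Pi_exp_def n_def len ..
  have A: "(\<Sum>Z\<in>sentences n. m Z * h Z) \<le> Pi_exp P Y h"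
    unfolding EY by (intro sum_mono mult_right_mono mY h01)
  have A': "(\<Sum>Z\<in>sentences n. m Z * h Z) \<le> Pi_exp P X h"
    unfolding EX by (intro sum_mono mult_right_mono mX h01)
  have B: "(\<Sum>Z\<in>sentences n. (Pi_pmf P X Z - m Z) * h Z) \<le> (\<Sum>Z\<in>sentences n. (Pi_pmf P X Z - m Z))"
    by (intro sum_mono mult_left_le) (use mX h01 in auto)
  have B': "(\<Sum>Z\<in>sentences n. (Pi_pmf P Y Z - m Z) * h Z) \<le> (\<Sum>Z\<in>sentences n. (Pi_pmf P Y Z - m Z))"
    by (intro sum_mono mult_left_le) (use mY h01 in auto)
  have C: "Pi_exp P X h = (\<Sum>Z\<in>sentences n. m Z * h Z) + (\<Sum>Z\<in>sentences n. (Pi_pmf P X Z - m Z) * h Z)"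
    unfolding EX sum.distrib[symmetric] by (simp add: algebra_simps)
  have C': "Pi_exp P Y h = (\<Sum>Z\<in>sentences n. m Z * h Z) + (\<Sum>Z\<in>sentences n. (Pi_pmf P Y Z - m Z) * h Z)"
    unfolding EY sum.distrib[symmetric] by (simp add: algebra_simps)
  have D: "(\<Sum>Z\<in>sentences n. (Pi_pmf P X Z - m Z)) = 1 - r"
    using sumX summ by (simp add: sum_subtractf)
  have D': "(\<Sum>Z\<in>sentences n. (Pi_pmf P Y Z - m Z)) = 1 - r"
    using sumY summ by (simp add: sum_subtractf)
  show "Pi_exp P Y h \<ge> Pi_exp P X h - (1 - (\<Prod>i<length X. real (card (P (X!i) \<inter> P (Y!i))) / real (card (P (X!i)))))"
    using A B C D unfolding r_def by linarith
  show "Pi_exp P Y h \<le> Pi_exp P X h + (1 - (\<Prod>i<length X. real (card (P (X!i) \<inter> P (Y!i))) / real (card (P (X!i)))))"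
    using A' B' C' D' unfolding r_def by linarith
qed

lemma pmf_sum1:
  fixes P :: "'w::finite \<Rightarrow> 'w set"
  assumes ne: "\<And>x. P x \<noteq> {}"
  shows "(\<Sum>Z\<in>sentences (length X). Pi_pmf P X Z) = 1"
  unfolding Pi_pmf_def
  using sum_prod_sent[of "\<lambda>i z. (if z \<in> P (X!i) then 1 else 0) / real (card (P (X!i)))" "length X"]
  by (simp add: sum_ind ne)

lemma exp_bounds:
  fixes P :: "'w::finite \<Rightarrow> 'w set"
  assumes ne: "\<And>x. P x \<noteq> {}" and h: "h \<in> unit_funs"
  shows "0 \<le> Pi_exp P X h" "Pi_exp P X h \<le> 1"
proof -
  have h01: "0 \<le> h Z" "h Z \<le> 1" for Z using h by (auto simp: unit_funs_def)
  have p0: "0 \<le> Pi_pmf P X Z" for Z unfolding Pi_pmf_def by (intro prod_nonneg) auto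
  show "0 \<le> Pi_exp P X h" unfolding Pi_exp_def by (intro sum_nonneg mult_nonneg_nonneg p0 h01)
  have "Pi_exp P X h \<le> (\<Sum>Z\<in>sentences (length X). Pi_pmf P X Z)"
    unfolding Pi_exp_def by (intro sum_mono mult_left_le p0 h01)
  then show "Pi_exp P X h \<le> 1" using pmf_sum1[OF ne] by simp
qed

lemma q_le:
  fixes P S :: "'w::finite \<Rightarrow> 'w set"
  assumes "x' \<in> S x"
  shows "q_word S P x \<le> real (card (P x \<inter> P x')) / real (card (P x))"
  unfolding q_word_def using assms by (intro Min_le) auto

lemma q_ge0:
  fixes P S :: "'w::finite \<Rightarrow> 'w set"
  assumes "x \<in> S x"
  shows "0 \<le> q_word S P x"
  unfolding q_word_def using assms by (subst Min_ge_iff) auto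

lemma q_le1:
  fixes P S :: "'w::finite \<Rightarrow> 'w set"
  assumes "x \<in> S x" "P x \<noteq> {}"
  shows "q_word S P x \<le> 1"
  using q_le[of x S x P] assms by (simp add: card_gt_0_iff)

lemma rq:
  fixes P S :: "'w::finite \<Rightarrow> 'w set"
  assumes refl: "\<And>x. x \<in> S x" and ne: "\<And>x. P x \<noteq> {}"
    and X': "X' \<in> syn_set S R X"
  shows "prod_list (take R (sort (map (q_word S P) X)))
     \<le> (\<Prod>i<length X. real (card (P (X!i) \<inter> P (X'!i))) / real (card (P (X!i))))"
proof -
  define D where "D = {i. i < length X \<and> X' ! i \<noteq> X ! i}"
  define r where "r i = real (card (P (X!i) \<inter> P (X'!i))) / real (card (P (X!i)))" for i
  have cD: "card D \<le> R" and syn: "\<forall>i<length X. X' ! i \<in> S (X ! i)"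
    using X' by (auto simp: syn_set_def D_def)
  have Dsub: "D \<subseteq> {..<length X}" by (auto simp: D_def)
  have "prod_list (take R (sort (map (q_word S P) X))) \<le> (\<Prod>i\<in>D. map (q_word S P) X ! i)"
    using Dsub cD by (intro prod_D) (auto simp: q_ge0 q_le1 refl ne)
  also have "\<dots> = (\<Prod>i\<in>D. q_word S P (X ! i))"
    using Dsub by (intro prod.cong) auto
  also have "\<dots> \<le> (\<Prod>i\<in>D. r i)"
    unfolding r_def using Dsub syn by (intro prod_mono conjI q_ge0 refl q_le) auto
  also have "\<dots> = (\<Prod>i\<in>D. r i) * (\<Prod>i\<in>{..<length X} - D. r i)"
  proof -
    have "(\<Prod>i\<in>{..<length X} - D. r i) = 1"
      by (intro prod.neutral) (auto simp: D_def r_def ne card_gt_0_iff)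
    then show ?thesis by simp
  qed
  also have "\<dots> = (\<Prod>i<length X. r i)"
    using prod.subset_diff[OF Dsub, of r] by (simp add: mult.commute)
  finally show ?thesis unfolding r_def .
qed

theorem theorem3:
  fixes S P :: "'w::finite \<Rightarrow> 'w set"
    and f :: "'w list \<Rightarrow> 'y::finite"
    and L R :: nat and X :: "'w list" and c :: 'y
  assumes syn_refl: "\<And>x. x \<in> S x"
    and syn_sym: "\<And>x y. y \<in> S x \<longleftrightarrow> x \<in> S y"
    and P_ne: "\<And>x. P x \<noteq> {}"
    and P_card: "\<And>x x'. x' \<in> S x \<Longrightarrow> card (P x) = card (P x')"
    and L: "L \<ge> 1" and R: "R \<le> L"
    and X: "X \<in> sentences L"
  shows "g_low S P R f X c \<ge> max (g_RS P f X c - q_sent S P R X) 0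
       \<and> g_up S P R f X c \<le> min (g_RS P f X c + q_sent S P R X) 1"
proof -
  define A where "A = {Pi_exp P X' h | h X'. h \<in> unit_funs \<and> X' \<in> syn_set S R X \<and>
                              Pi_exp P X h = g_RS P f X c}"
  let ?g = "g_RS P f X c" and ?q = "q_sent S P R X"
  have hc: "(\<lambda>Z. if f Z = c then 1 else 0::real) \<in> unit_funs" by (simp add: unit_funs_def)
  have XX: "X \<in> syn_set S R X" by (simp add: syn_set_def syn_refl)
  have Ane: "A \<noteq> {}" unfolding A_def using hc XX by (auto simp: g_RS_def)
  have bnd: "max (?g - ?q) 0 \<le> a \<and> a \<le> min (?g + ?q) 1" if "a \<in> A" for a
  proof -
    obtain h X' where a: "a = Pi_exp P X' h" and h: "h \<in> unit_funs" and X': "X' \<in> syn_set S R X"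
      and hg: "Pi_exp P X h = ?g"
      using \<open>a \<in> A\<close> unfolding A_def by blast
    have len: "length X' = length X" using X' by (simp add: syn_set_def)
    have cardY: "\<forall>i<length X. card (P (X'!i)) = card (P (X!i))"
      using X' P_card by (auto simp: syn_set_def)
    have r: "1 - (\<Prod>i<length X. real (card (P (X!i) \<inter> P (X'!i))) / real (card (P (X!i)))) \<le> ?q"
      using rq[where S=S and P=P, OF syn_refl P_ne X'] unfolding q_sent_def by linarith
    note s = shift[where P=P, OF len cardY P_ne h]
    note e = exp_bounds[where P=P and X=X', OF P_ne h]
    have b1: "?g - ?q \<le> a" using s(1) r hg a by linarith
    have b2: "a \<le> ?g + ?q" using s(2) r hg a by linarith
    show ?thesis using b1 b2 e a by simp
  qed
  have low: "max (?g - ?q) 0 \<le> Inf A"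
    by (rule cInf_greatest[OF Ane]) (use bnd in blast)
  have up: "Sup A \<le> min (?g + ?q) 1"
    by (rule cSup_least[OF Ane]) (use bnd in blast)
  have el: "g_low S P R f X c = Inf A" unfolding g_low_def A_def by (rule refl)
  have eu: "g_up S P R f X c = Sup A" unfolding g_up_def A_def by (rule refl)
  show ?thesis unfolding el eu using low up by (rule conjI)
qed

end
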